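(* For every integer $n \ge 1$, let $f(n)$ be the number of partitions $\lambda \vdash n$ that have a fixed hook. Then $$f(n) = \sum_{\lambda \vdash n} \#\{\, i \ge 1 : \text{the part } i \text{ occurs in } \lambda \text{ with multiplicity exactly } i \,\}.$$
   Context: A partition $\lambda=(\lambda_1,\dots,\lambda_t)$ of $n$ (written $\lambda\vdash n$) is a sequence of integers $\lambda_1\ge\lambda_2\ge\cdots\ge\lambda_t>0$ with $\sum_i\lambda_i=n$; $t$ is its number of parts. The first-column hook lengths of $\lambda$ are $h_{i,1}(\lambda)=\lambda_i+(t-i)$ for $1\le i\le t$ (the hook length of the box $(i,1)$ of the Young diagram). For $h\in\mathbb{Z}$, $\lambda$ has an $h$-fixed hook if there is some $i\ge1$ with $h_{i,1}(\lambda)=i+h$; a $0$-fixed hook is called a fixed hook, i.e. $\lambda$ has a fixed hook if $h_{i,1}(\lambda)=i$ for some $i$. *)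

theory Defs
  imports Main
begin

text \<open>A partition of n: a weakly decreasing list of positive integers summing to n.
  The list index is 0-based, so entry (i-1) of the list is the part lambda_i.\<close>
definition is_partition :: "nat \<Rightarrow> nat list \<Rightarrow> bool" where
  "is_partition n lam \<longleftrightarrow> sorted_wrt (\<ge>) lam \<and> (\<forall>x\<in>set lam. 0 < x) \<and> sum_list lam = n"

definition partitions :: "nat \<Rightarrow> nat list set" where
  "partitions n = {lam. is_partition n lam}"

definition first_col_hook :: "nat list \<Rightarrow> nat \<Rightarrow> int" where
  "first_col_hook lam i = int (lam ! (i - 1)) + (int (length lam) - int i)"

definition has_h_fixed_hook :: "int \<Rightarrow> nat list \<Rightarrow> bool" where
  "has_h_fixed_hook h lam \<longleftrightarrow> (\<exists>i. 1 \<le> i \<and> i \<le> length lam \<and> first_col_hook lam i = int i + h)"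

definition has_fixed_hook :: "nat list \<Rightarrow> bool" where
  "has_fixed_hook lam \<longleftrightarrow> has_h_fixed_hook 0 lam"

definition self_mult_parts :: "nat list \<Rightarrow> nat set" where
  "self_mult_parts lam = {i. 1 \<le> i \<and> count_list lam i = i}"

end

theory Submission
  imports Defs "HOL-Computational_Algebra.Formal_Power_Series"
begin
unbundle fps_syntax

definition LP :: "nat \<Rightarrow> (nat \<Rightarrow> bool) \<Rightarrow> nat \<Rightarrow> nat list set" where
  "LP k P m = {xs. length xs = k \<and> sorted_wrt (\<ge>) xs \<and> (\<forall>x\<in>set xs. P x) \<and> sum_list xs = m}"

definition RR :: "nat \<Rightarrow> nat \<Rightarrow> nat list set" where
  "RR r m = {xs. sorted_wrt (\<ge>) xs \<and> (\<forall>x\<in>set xs. 1 \<le> x \<and> x \<le> r) \<and> sum_list xs = m}"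

definition gf :: "(nat \<Rightarrow> nat list set) \<Rightarrow> rat fps" where
  "gf S = Abs_fps (\<lambda>m. of_nat (card (S m)))"

definition Cat :: "(nat \<Rightarrow> nat list set) \<Rightarrow> (nat \<Rightarrow> nat list set) \<Rightarrow> nat \<Rightarrow> nat list set" where
  "Cat A B m = {xs @ ys | xs ys. xs \<in> A (sum_list xs) \<and> ys \<in> B (sum_list ys) \<and> sum_list xs + sum_list ys = m}"

definition Sg :: "nat list \<Rightarrow> nat \<Rightarrow> nat list set" where
  "Sg c m = (if m = sum_list c then {c} else {})"

lemma LP_props: "xs \<in> LP k P x \<Longrightarrow> length xs = k \<and> sum_list xs = x"
  unfolding LP_def by auto

lemma RR_sum: "xs \<in> RR r x \<Longrightarrow> sum_list xs = x"
  unfolding RR_def by auto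

lemma finite_LP: "finite (LP k P m)"
proof -
  have "LP k P m \<subseteq> {xs. set xs \<subseteq> {0..m} \<and> length xs = k}"
    unfolding LP_def using member_le_sum_list by fastforce
  moreover have "finite {xs. set xs \<subseteq> {0..m} \<and> length xs = k}"
    by (rule finite_lists_length_eq) simp
  ultimately show ?thesis by (rule finite_subset)
qed

lemma length_le_sum_pos: "(\<forall>x\<in>set xs. 1 \<le> (x::nat)) \<Longrightarrow> length xs \<le> sum_list xs"
  by (induction xs) auto

lemma finite_RR: "finite (RR r m)"
proof -
  have "RR r m \<subseteq> {xs. set xs \<subseteq> {0..m} \<and> length xs \<le> m}"
    unfolding RR_def using member_le_sum_list length_le_sum_pos by fastforce
  moreover have "finite {xs. set xs \<subseteq> {0..m} \<and> length xs \<le> m}"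
    by (rule finite_lists_length_le) simp
  ultimately show ?thesis by (rule finite_subset)
qed

lemma gf_nth: "gf S $ m = of_nat (card (S m))"
  by (simp add: gf_def)

lemma gf_Cat:
  assumes A: "\<And>x xs. xs \<in> A x \<Longrightarrow> length xs = k \<and> sum_list xs = x"
    and B: "\<And>y ys. ys \<in> B y \<Longrightarrow> sum_list ys = y"
    and fA: "\<And>x. finite (A x)" and fB: "\<And>y. finite (B y)"
  shows "gf (Cat A B) = gf A * gf B"
proof (rule fps_ext)
  fix m
  have eq: "Cat A B m = (\<Union>i\<in>{0..m}. (\<lambda>(xs,ys). xs @ ys) ` (A i \<times> B (m - i)))"
  proof
    show "Cat A B m \<subseteq> (\<Union>i\<in>{0..m}. (\<lambda>(xs,ys). xs @ ys) ` (A i \<times> B (m - i)))"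
    proof
      fix zs assume "zs \<in> Cat A B m"
      then obtain xs ys where z: "zs = xs @ ys" "xs \<in> A (sum_list xs)" "ys \<in> B (sum_list ys)"
        "sum_list xs + sum_list ys = m" unfolding Cat_def by blast
      then have "ys \<in> B (m - sum_list xs)" by (metis add_diff_cancel_left')
      with z show "zs \<in> (\<Union>i\<in>{0..m}. (\<lambda>(xs,ys). xs @ ys) ` (A i \<times> B (m - i)))"
        by (intro UN_I[of "sum_list xs"]) auto
    qed
  next
    show "(\<Union>i\<in>{0..m}. (\<lambda>(xs,ys). xs @ ys) ` (A i \<times> B (m - i))) \<subseteq> Cat A B m"
    proof
      fix zs assume "zs \<in> (\<Union>i\<in>{0..m}. (\<lambda>(xs,ys). xs @ ys) ` (A i \<times> B (m - i)))"
      then obtain i xs ys where z: "i \<le> m" "xs \<in> A i" "ys \<in> B (m - i)" "zs = xs @ ys" by auto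
      have "sum_list xs = i" using A z(2) by blast
      moreover have "sum_list ys = m - i" using B z(3) by blast
      ultimately show "zs \<in> Cat A B m" unfolding Cat_def
        by (intro CollectI exI[of _ xs] exI[of _ ys]) (use z in auto)
    qed
  qed
  have inj: "inj_on (\<lambda>(xs,ys). xs @ ys) (A i \<times> B j)" for i j
  proof (rule inj_onI, clarsimp)
    fix xs ys xs' ys' assume "xs \<in> A i" "xs' \<in> A i" "xs @ ys = xs' @ ys'"
    moreover have "length xs = length xs'" using A \<open>xs \<in> A i\<close> \<open>xs' \<in> A i\<close> by metis
    ultimately show "xs = xs' \<and> ys = ys'" by auto
  qed
  have disj: "((\<lambda>(xs,ys). xs @ ys) ` (A i \<times> B (m - i))) \<inter> ((\<lambda>(xs,ys). xs @ ys) ` (A j \<times> B (m - j))) = {}"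
    if "i \<noteq> j" for i j
  proof (rule ccontr)
    assume "\<not> ?thesis"
    then obtain xs ys xs' ys' where "xs \<in> A i" "xs' \<in> A j" "xs @ ys = xs' @ ys'" by auto
    moreover have "length xs = length xs'" using A \<open>xs \<in> A i\<close> \<open>xs' \<in> A j\<close> by metis
    ultimately have "xs = xs'" by auto
    then show False using A \<open>xs \<in> A i\<close> \<open>xs' \<in> A j\<close> that by metis
  qed
  have "card (Cat A B m) = (\<Sum>i\<in>{0..m}. card ((\<lambda>(xs,ys). xs @ ys) ` (A i \<times> B (m - i))))"
    unfolding eq by (rule card_UN_disjoint) (use fA fB disj in auto)
  also have "\<dots> = (\<Sum>i\<in>{0..m}. card (A i) * card (B (m - i)))"
    by (rule sum.cong) (simp_all add: card_image[OF inj] card_cartesian_product)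
  finally show "gf (Cat A B) $ m = (gf A * gf B) $ m"
    by (simp add: gf_nth fps_mult_nth)
qed

lemma finite_Sg: "finite (Sg c m)"
  by (simp add: Sg_def)

lemma gf_Sg: "gf (Sg c) = fps_X ^ (sum_list c)"
  by (rule fps_ext) (simp add: gf_nth Sg_def fps_X_power_nth)

lemma gf_Un:
  assumes "\<And>m. S m = T m \<union> U m" "\<And>m. T m \<inter> U m = {}" "\<And>m. finite (T m)" "\<And>m. finite (U m)"
  shows "gf S = gf T + gf U"
  by (rule fps_ext) (simp add: gf_nth assms card_Un_disjoint)

lemma sum_list_map_plus: "sum_list (map (\<lambda>x. x + c) xs) = sum_list xs + c * length (xs::nat list)"
  by (induction xs) auto

lemma sum_list_ge: "(\<forall>x\<in>set xs. c \<le> x) \<Longrightarrow> c * length xs \<le> sum_list (xs::nat list)"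
  by (induction xs) auto

lemma gf_shift:
  assumes Q: "\<And>x. Q x \<longleftrightarrow> c \<le> x \<and> P (x - c)"
  shows "gf (LP k Q) = fps_X ^ (c * k) * gf (LP k P)"
proof (rule fps_ext)
  fix m
  show "gf (LP k Q) $ m = (fps_X ^ (c * k) * gf (LP k P)) $ m"
  proof (cases "m < c * k")
    case True
    have "LP k Q m = {}"
      using True sum_list_ge[of _ c] unfolding LP_def Q by fastforce
    then show ?thesis using True by (simp add: gf_nth fps_X_power_mult_nth)
  next
    case False
    have eq: "LP k Q m = map (\<lambda>x. x + c) ` LP k P (m - c * k)"
    proof
      show "LP k Q m \<subseteq> map (\<lambda>x. x + c) ` LP k P (m - c * k)"
      proof
        fix xs assume xs: "xs \<in> LP k Q m"
        have ge: "\<forall>x\<in>set xs. c \<le> x" using xs unfolding LP_def Q by auto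
        have "xs = map (\<lambda>x. x + c) (map (\<lambda>x. x - c) xs)"
          using ge by (simp add: map_idI)
        moreover have "map (\<lambda>x. x - c) xs \<in> LP k P (m - c * k)"
        proof -
          have "sum_list xs = sum_list (map (\<lambda>x. x - c) xs) + c * k"
            using xs ge sum_list_map_plus[of c "map (\<lambda>x. x - c) xs"] unfolding LP_def
            by (simp add: map_idI)
          moreover have "sorted_wrt (\<ge>) (map (\<lambda>x. x - c) xs)"
            using xs unfolding LP_def sorted_wrt_map
            by (auto elim!: sorted_wrt_mono_rel[rotated])
          ultimately show ?thesis using xs unfolding LP_def Q by auto
        qed
        ultimately show "xs \<in> map (\<lambda>x. x + c) ` LP k P (m - c * k)" by blast
      qed
    next
      show "map (\<lambda>x. x + c) ` LP k P (m - c * k) \<subseteq> LP k Q m"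
      proof
        fix ys assume "ys \<in> map (\<lambda>x. x + c) ` LP k P (m - c * k)"
        then obtain xs where xs: "xs \<in> LP k P (m - c * k)" "ys = map (\<lambda>x. x + c) xs" by auto
        have "sorted_wrt (\<ge>) ys"
          using xs(1) unfolding xs(2) LP_def sorted_wrt_map
          by (auto elim!: sorted_wrt_mono_rel[rotated])
        then show "ys \<in> LP k Q m"
          using xs False sum_list_map_plus[of c xs] unfolding LP_def Q by auto
      qed
    qed
    have inj: "inj_on (map (\<lambda>x. x + c)) X" for X
      by (rule inj_on_subset[OF inj_mapI]) (auto intro: injI)
    show ?thesis using False
      by (simp add: gf_nth fps_X_power_mult_nth eq card_image[OF inj])
  qed
qed

lemma Cat_Sg_left: "zs \<in> Cat (Sg c) B m \<longleftrightarrow> (\<exists>ys. zs = c @ ys \<and> ys \<in> B (sum_list ys) \<and> sum_list c + sum_list ys = m)"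
  unfolding Cat_def Sg_def by auto

lemma Cat_Sg_right: "zs \<in> Cat A (Sg c) m \<longleftrightarrow> (\<exists>xs. zs = xs @ c \<and> xs \<in> A (sum_list xs) \<and> sum_list xs + sum_list c = m)"
  unfolding Cat_def Sg_def by auto

lemma gf_Cat_Sg_right:
  assumes "\<And>x xs. xs \<in> A x \<Longrightarrow> length xs = k \<and> sum_list xs = x" "\<And>x. finite (A x)"
  shows "gf (Cat A (Sg c)) = gf A * fps_X ^ sum_list c"
  by (subst gf_Cat[where k=k]) (use assms in \<open>auto simp: gf_Sg Sg_def split: if_splits\<close>)

lemma gf_Cat_Sg_left:
  assumes "\<And>y ys. ys \<in> B y \<Longrightarrow> sum_list ys = y" "\<And>y. finite (B y)"
  shows "gf (Cat (Sg c) B) = fps_X ^ sum_list c * gf B"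
  by (subst gf_Cat[where k="length c"]) (use assms in \<open>auto simp: gf_Sg Sg_def split: if_splits\<close>)

fun qp :: "nat \<Rightarrow> rat fps" where
  "qp 0 = 1"
| "qp (Suc k) = qp k * (1 - fps_X ^ Suc k)"

lemma qp_nth0: "qp k $ 0 = 1"
  by (induction k) auto

lemma qp_nz: "qp k \<noteq> 0"
  using qp_nth0[of k] by auto

lemma LP0: "LP 0 P m = (if m = 0 then {[]} else {})"
  unfolding LP_def by auto

lemma gf_LP0: "gf (LP 0 P) = 1"
  by (rule fps_ext) (simp add: gf_nth LP0)

lemma sorted_last0:
  assumes "sorted_wrt (\<ge>) xs" "(0::nat) \<in> set xs"
  shows "\<exists>ys. xs = ys @ [0]"
  using assms
proof (induction xs)
  case Nil then show ?case by simp
next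
  case (Cons x xs)
  show ?case
  proof (cases "xs = []")
    case True with Cons show ?thesis by simp
  next
    case False
    have "0 \<in> set xs" using Cons.prems False by (cases xs) auto
    then obtain ys where "xs = ys @ [0]" using Cons by auto
    then show ?thesis by (intro exI[of _ "x # ys"]) simp
  qed
qed

lemma gf_E_rec: "gf (LP (Suc j) (\<lambda>_. True)) = gf (LP j (\<lambda>_. True)) + fps_X ^ Suc j * gf (LP (Suc j) (\<lambda>_. True))"
proof -
  have split: "LP (Suc j) (\<lambda>_. True) m = Cat (LP j (\<lambda>_. True)) (Sg [0]) m \<union> LP (Suc j) (\<lambda>x. 1 \<le> x) m" for m
  proof
    show "LP (Suc j) (\<lambda>_. True) m \<subseteq> Cat (LP j (\<lambda>_. True)) (Sg [0]) m \<union> LP (Suc j) (\<lambda>x. 1 \<le> x) m"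
    proof
      fix xs assume xs: "xs \<in> LP (Suc j) (\<lambda>_. True) m"
      show "xs \<in> Cat (LP j (\<lambda>_. True)) (Sg [0]) m \<union> LP (Suc j) (\<lambda>x. 1 \<le> x) m"
      proof (cases "0 \<in> set xs")
        case True
        obtain ys where e: "xs = ys @ [0]" using sorted_last0 xs True unfolding LP_def by blast
        have "ys \<in> LP j (\<lambda>_. True) (sum_list ys)" "sum_list ys = m"
          using xs unfolding e LP_def by (auto simp: sorted_wrt_append)
        then have "xs \<in> Cat (LP j (\<lambda>_. True)) (Sg [0]) m"
          unfolding Cat_Sg_right e by auto
        then show ?thesis by blast
      next
        case False
        then have "\<forall>x\<in>set xs. 1 \<le> x" by (metis less_one not_le)
        then show ?thesis using xs unfolding LP_def by auto
      qed
    qed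
  next
    show "Cat (LP j (\<lambda>_. True)) (Sg [0]) m \<union> LP (Suc j) (\<lambda>x. 1 \<le> x) m \<subseteq> LP (Suc j) (\<lambda>_. True) m"
    proof (rule Un_least)
      show "LP (Suc j) (\<lambda>x. 1 \<le> x) m \<subseteq> LP (Suc j) (\<lambda>_. True) m"
        unfolding LP_def by blast
      show "Cat (LP j (\<lambda>_. True)) (Sg [0]) m \<subseteq> LP (Suc j) (\<lambda>_. True) m"
      proof
        fix zs assume "zs \<in> Cat (LP j (\<lambda>_. True)) (Sg [0]) m"
        then obtain xs where "zs = xs @ [0]" "xs \<in> LP j (\<lambda>_. True) (sum_list xs)" "sum_list xs = m"
          unfolding Cat_Sg_right by auto
        then show "zs \<in> LP (Suc j) (\<lambda>_. True) m" unfolding LP_def by (simp add: sorted_wrt_append)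
      qed
    qed
  qed
  have disj: "Cat (LP j (\<lambda>_. True)) (Sg [0]) m \<inter> LP (Suc j) (\<lambda>x. 1 \<le> x) m = {}" for m
  proof -
    { fix zs assume a: "zs \<in> Cat (LP j (\<lambda>_. True)) (Sg [0]) m" "zs \<in> LP (Suc j) (\<lambda>x. 1 \<le> x) m"
      then obtain xs where "zs = xs @ [0]" unfolding Cat_Sg_right by blast
      then have False using a(2) unfolding LP_def by auto }
    then show ?thesis by blast
  qed
  have fC: "finite (Cat (LP j (\<lambda>_. True)) (Sg [0]) m)" for m
    using split[of m] finite_LP by (metis finite_Un)
  have "gf (LP (Suc j) (\<lambda>_. True)) = gf (Cat (LP j (\<lambda>_. True)) (Sg [0])) + gf (LP (Suc j) (\<lambda>x. 1 \<le> x))"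
    by (rule gf_Un[OF split disj fC finite_LP])
  also have "gf (Cat (LP j (\<lambda>_. True)) (Sg [0])) = gf (LP j (\<lambda>_. True))"
    using gf_Cat_Sg_right[of "LP j (\<lambda>_. True)" j "[0]", OF LP_props finite_LP] by simp
  also have "gf (LP (Suc j) (\<lambda>x. 1 \<le> x)) = fps_X ^ Suc j * gf (LP (Suc j) (\<lambda>_. True))"
    by (subst gf_shift[where c=1 and P="\<lambda>_. True"]) auto
  finally show ?thesis .
qed

lemma gf_E: "gf (LP k (\<lambda>_. True)) * qp k = 1"
proof (induction k)
  case 0 then show ?case by (simp add: gf_LP0)
next
  case (Suc j)
  have rec: "gf (LP (Suc j) (\<lambda>_. True)) * (1 - fps_X ^ Suc j) = gf (LP j (\<lambda>_. True))"
    using gf_E_rec[of j] by (simp add: algebra_simps)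
  have "gf (LP (Suc j) (\<lambda>_. True)) * qp (Suc j) = (gf (LP (Suc j) (\<lambda>_. True)) * (1 - fps_X ^ Suc j)) * qp j"
    by (simp only: qp.simps mult.assoc mult.commute[of "qp j"])
  also have "\<dots> = 1" unfolding rec by (rule Suc.IH)
  finally show ?case .
qed

lemma RR0: "RR 0 m = (if m = 0 then {[]} else {})"
proof -
  have "xs \<in> RR 0 m \<longleftrightarrow> m = 0 \<and> xs = []" for xs
  proof
    assume "xs \<in> RR 0 m"
    then show "m = 0 \<and> xs = []" unfolding RR_def by (cases xs) auto
  qed (auto simp: RR_def)
  then show ?thesis by auto
qed

lemma sorted_hd_max:
  assumes "sorted_wrt (\<ge>) xs" "(c::nat) \<in> set xs" "\<forall>x\<in>set xs. x \<le> c"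
  shows "\<exists>ys. xs = c # ys"
proof (cases xs)
  case Nil then show ?thesis using assms by auto
next
  case (Cons y ys)
  have "y \<ge> c" using assms(1,2) Cons by auto
  moreover have "y \<le> c" using assms(3) Cons by auto
  ultimately show ?thesis using Cons by auto
qed

lemma gf_RR_rec: "gf (RR (Suc r)) = gf (RR r) + fps_X ^ Suc r * gf (RR (Suc r))"
proof -
  have split: "RR (Suc r) m = RR r m \<union> Cat (Sg [Suc r]) (RR (Suc r)) m" for m
  proof
    show "RR (Suc r) m \<subseteq> RR r m \<union> Cat (Sg [Suc r]) (RR (Suc r)) m"
    proof
      fix xs assume xs: "xs \<in> RR (Suc r) m"
      show "xs \<in> RR r m \<union> Cat (Sg [Suc r]) (RR (Suc r)) m"
      proof (cases "Suc r \<in> set xs")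
        case True
        obtain ys where e: "xs = Suc r # ys" using sorted_hd_max xs True unfolding RR_def by blast
        have "ys \<in> RR (Suc r) (sum_list ys)" "Suc r + sum_list ys = m"
          using xs unfolding e RR_def by auto
        then have "xs \<in> Cat (Sg [Suc r]) (RR (Suc r)) m"
          unfolding Cat_Sg_left e by auto
        then show ?thesis by blast
      next
        case False
        have "\<forall>x\<in>set xs. x \<le> r"
        proof
          fix x assume "x \<in> set xs"
          then show "x \<le> r" using xs False unfolding RR_def by (cases "x = Suc r") auto
        qed
        then show ?thesis using xs unfolding RR_def by auto
      qed
    qed
  next
    show "RR r m \<union> Cat (Sg [Suc r]) (RR (Suc r)) m \<subseteq> RR (Suc r) m"
    proof (rule Un_least)
      show "RR r m \<subseteq> RR (Suc r) m" unfolding RR_def by auto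
      show "Cat (Sg [Suc r]) (RR (Suc r)) m \<subseteq> RR (Suc r) m"
      proof
        fix zs assume "zs \<in> Cat (Sg [Suc r]) (RR (Suc r)) m"
        then obtain ys where "zs = Suc r # ys" "ys \<in> RR (Suc r) (sum_list ys)" "Suc r + sum_list ys = m"
          unfolding Cat_Sg_left by auto
        then show "zs \<in> RR (Suc r) m" unfolding RR_def by auto
      qed
    qed
  qed
  have disj: "RR r m \<inter> Cat (Sg [Suc r]) (RR (Suc r)) m = {}" for m
  proof -
    { fix zs assume a: "zs \<in> Cat (Sg [Suc r]) (RR (Suc r)) m" "zs \<in> RR r m"
      then obtain ys where "zs = Suc r # ys" unfolding Cat_Sg_left by auto
      then have False using a(2) unfolding RR_def by auto }
    then show ?thesis by blast
  qed
  have fC: "finite (Cat (Sg [Suc r]) (RR (Suc r)) m)" for m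
    using split[of m] finite_RR by (metis finite_Un)
  have "gf (RR (Suc r)) = gf (RR r) + gf (Cat (Sg [Suc r]) (RR (Suc r)))"
    by (rule gf_Un[OF split disj finite_RR fC])
  also have "gf (Cat (Sg [Suc r]) (RR (Suc r))) = fps_X ^ Suc r * gf (RR (Suc r))"
    using gf_Cat_Sg_left[of "RR (Suc r)" "[Suc r]", OF RR_sum finite_RR] by simp
  finally show ?thesis .
qed

lemma gf_RR: "gf (RR k) * qp k = 1"
proof (induction k)
  case 0 then show ?case by (rule fps_ext) (simp add: gf_nth RR0)
next
  case (Suc j)
  have rec: "gf (RR (Suc j)) * (1 - fps_X ^ Suc j) = gf (RR j)"
    using gf_RR_rec[of j] by (simp add: algebra_simps)
  have "gf (RR (Suc j)) * qp (Suc j) = (gf (RR (Suc j)) * (1 - fps_X ^ Suc j)) * qp j"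
    by (simp only: qp.simps mult.assoc mult.commute[of "qp j"])
  also have "\<dots> = 1" unfolding rec by (rule Suc.IH)
  finally show ?case .
qed


lemma sorted_replicate_ge: "sorted_wrt (\<ge>) (replicate n (x::nat))"
  by (induction n) auto

lemma LP_le0: "LP s (\<lambda>x. x \<le> 0) m = (if m = 0 then {replicate s 0} else {})"
proof -
  have "xs \<in> LP s (\<lambda>x. x \<le> 0) m \<longleftrightarrow> m = 0 \<and> xs = replicate s 0" for xs
  proof
    assume "xs \<in> LP s (\<lambda>x. x \<le> 0) m"
    then have "length xs = s" "\<forall>x\<in>set xs. x = 0" "sum_list xs = m" unfolding LP_def by auto
    then have e: "xs = replicate s 0" using replicate_length_same[of xs 0] by simp
    then show "m = 0 \<and> xs = replicate s 0" using \<open>sum_list xs = m\<close> by (simp add: sum_list_replicate)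
  next
    assume "m = 0 \<and> xs = replicate s 0"
    then show "xs \<in> LP s (\<lambda>x. x \<le> 0) m" unfolding LP_def
      by (auto simp: sorted_replicate_ge)
  qed
  then show ?thesis by auto
qed

lemma gf_LP_le0: "gf (LP s (\<lambda>x. x \<le> 0)) = 1"
  by (rule fps_ext) (simp only: gf_nth LP_le0, simp)

lemma gf_Bx_rec:
  "gf (LP (Suc s) (\<lambda>x. x \<le> Suc r)) = gf (LP (Suc s) (\<lambda>x. x \<le> r)) + fps_X ^ Suc r * gf (LP s (\<lambda>x. x \<le> Suc r))"
proof -
  have split: "LP (Suc s) (\<lambda>x. x \<le> Suc r) m = LP (Suc s) (\<lambda>x. x \<le> r) m \<union> Cat (Sg [Suc r]) (LP s (\<lambda>x. x \<le> Suc r)) m" for m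
  proof
    show "LP (Suc s) (\<lambda>x. x \<le> Suc r) m \<subseteq> LP (Suc s) (\<lambda>x. x \<le> r) m \<union> Cat (Sg [Suc r]) (LP s (\<lambda>x. x \<le> Suc r)) m"
    proof
      fix xs assume xs: "xs \<in> LP (Suc s) (\<lambda>x. x \<le> Suc r) m"
      show "xs \<in> LP (Suc s) (\<lambda>x. x \<le> r) m \<union> Cat (Sg [Suc r]) (LP s (\<lambda>x. x \<le> Suc r)) m"
      proof (cases "Suc r \<in> set xs")
        case True
        obtain ys where e: "xs = Suc r # ys" using sorted_hd_max xs True unfolding LP_def by blast
        have "ys \<in> LP s (\<lambda>x. x \<le> Suc r) (sum_list ys)" "Suc r + sum_list ys = m"
          using xs unfolding e LP_def by auto
        then have "xs \<in> Cat (Sg [Suc r]) (LP s (\<lambda>x. x \<le> Suc r)) m"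
          unfolding Cat_Sg_left e by auto
        then show ?thesis by blast
      next
        case False
        have "\<forall>x\<in>set xs. x \<le> r"
        proof
          fix x assume "x \<in> set xs"
          then show "x \<le> r" using xs False unfolding LP_def by (cases "x = Suc r") auto
        qed
        then show ?thesis using xs unfolding LP_def by auto
      qed
    qed
  next
    show "LP (Suc s) (\<lambda>x. x \<le> r) m \<union> Cat (Sg [Suc r]) (LP s (\<lambda>x. x \<le> Suc r)) m \<subseteq> LP (Suc s) (\<lambda>x. x \<le> Suc r) m"
    proof (rule Un_least)
      show "LP (Suc s) (\<lambda>x. x \<le> r) m \<subseteq> LP (Suc s) (\<lambda>x. x \<le> Suc r) m" unfolding LP_def by auto
      show "Cat (Sg [Suc r]) (LP s (\<lambda>x. x \<le> Suc r)) m \<subseteq> LP (Suc s) (\<lambda>x. x \<le> Suc r) m"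
      proof
        fix zs assume "zs \<in> Cat (Sg [Suc r]) (LP s (\<lambda>x. x \<le> Suc r)) m"
        then obtain ys where "zs = Suc r # ys" "ys \<in> LP s (\<lambda>x. x \<le> Suc r) (sum_list ys)" "Suc r + sum_list ys = m"
          unfolding Cat_Sg_left by auto
        then show "zs \<in> LP (Suc s) (\<lambda>x. x \<le> Suc r) m" unfolding LP_def by auto
      qed
    qed
  qed
  have disj: "LP (Suc s) (\<lambda>x. x \<le> r) m \<inter> Cat (Sg [Suc r]) (LP s (\<lambda>x. x \<le> Suc r)) m = {}" for m
  proof -
    { fix zs assume a: "zs \<in> Cat (Sg [Suc r]) (LP s (\<lambda>x. x \<le> Suc r)) m" "zs \<in> LP (Suc s) (\<lambda>x. x \<le> r) m"
      then obtain ys where "zs = Suc r # ys" unfolding Cat_Sg_left by auto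
      then have False using a(2) unfolding LP_def by auto }
    then show ?thesis by blast
  qed
  have fC: "finite (Cat (Sg [Suc r]) (LP s (\<lambda>x. x \<le> Suc r)) m)" for m
    using split[of m] finite_LP by (metis finite_Un)
  have "gf (LP (Suc s) (\<lambda>x. x \<le> Suc r)) = gf (LP (Suc s) (\<lambda>x. x \<le> r)) + gf (Cat (Sg [Suc r]) (LP s (\<lambda>x. x \<le> Suc r)))"
    by (rule gf_Un[OF split disj finite_LP fC])
  also have "gf (Cat (Sg [Suc r]) (LP s (\<lambda>x. x \<le> Suc r))) = fps_X ^ Suc r * gf (LP s (\<lambda>x. x \<le> Suc r))"
    using gf_Cat_Sg_left[of "LP s (\<lambda>x. x \<le> Suc r)" "[Suc r]", OF conjunct2[OF LP_props] finite_LP] by simp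
  finally show ?thesis .
qed

lemma gf_Bx: "gf (LP s (\<lambda>x. x \<le> r)) * qp s * qp r = qp (s + r)"
proof (induction s arbitrary: r)
  case 0 then show ?case by (simp add: gf_LP0)
next
  case (Suc s)
  note IHs = Suc
  show ?case
  proof (induction r)
    case 0
    have "gf (LP (Suc s) (\<lambda>x. x \<le> 0)) = 1" by (rule gf_LP_le0)
    then show ?case by simp
  next
    case (Suc r)
    define Q where "Q = qp (Suc (s + r))"
    have h1: "gf (LP (Suc s) (\<lambda>x. x \<le> r)) * qp (Suc s) * qp r = Q" using Suc unfolding Q_def by simp
    have h2: "gf (LP s (\<lambda>x. x \<le> Suc r)) * qp s * qp (Suc r) = Q" using IHs[of "Suc r"] unfolding Q_def by simp
    have "gf (LP (Suc s) (\<lambda>x. x \<le> Suc r)) * qp (Suc s) * qp (Suc r)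
        = (gf (LP (Suc s) (\<lambda>x. x \<le> r)) * qp (Suc s) * qp r) * (1 - fps_X ^ Suc r)
          + fps_X ^ Suc r * (gf (LP s (\<lambda>x. x \<le> Suc r)) * qp s * qp (Suc r)) * (1 - fps_X ^ Suc s)"
      unfolding gf_Bx_rec by (simp only: qp.simps) (simp add: algebra_simps)
    also have "\<dots> = Q * (1 - fps_X ^ Suc r * fps_X ^ Suc s)"
      unfolding h1 h2 by (simp add: algebra_simps)
    also have "fps_X ^ Suc r * fps_X ^ Suc s = (fps_X :: rat fps) ^ Suc (Suc (s + r))"
      by (simp add: power_add[symmetric])
    finally show ?case unfolding Q_def by simp
  qed
qed

lemma core:
  "gf (LP (s + r) (\<lambda>_. True)) * gf (LP s (\<lambda>x. x \<le> r)) = gf (LP s (\<lambda>_. True)) * gf (RR r)"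
proof -
  define T where "T = qp s * qp r * qp (s + r)"
  have "T \<noteq> 0" unfolding T_def using qp_nz by simp
  moreover have "(gf (LP (s + r) (\<lambda>_. True)) * gf (LP s (\<lambda>x. x \<le> r))) * T
     = (gf (LP (s + r) (\<lambda>_. True)) * qp (s + r)) * (gf (LP s (\<lambda>x. x \<le> r)) * qp s * qp r)"
    unfolding T_def by (simp add: ac_simps)
  moreover have "(gf (LP s (\<lambda>_. True)) * gf (RR r)) * T
     = (gf (LP s (\<lambda>_. True)) * qp s) * (gf (RR r) * qp r) * qp (s + r)"
    unfolding T_def by (simp add: ac_simps)
  ultimately show ?thesis using gf_E gf_RR gf_Bx by (metis mult_1 mult_right_cancel)
qed


lemma mem_Cat: "zs \<in> Cat A B m \<longleftrightarrow> (\<exists>xs ys. zs = xs @ ys \<and> xs \<in> A (sum_list xs) \<and> ys \<in> B (sum_list ys) \<and> sum_list xs + sum_list ys = m)"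
  unfolding Cat_def by blast

lemma Cat_sum: "zs \<in> Cat A B m \<Longrightarrow> sum_list zs = m"
  unfolding mem_Cat by auto

lemma finite_Cat:
  assumes "\<And>x. finite (A x)" "\<And>y. finite (B y)"
  shows "finite (Cat A B m)"
proof -
  have "Cat A B m \<subseteq> (\<lambda>(xs,ys). xs @ ys) ` (\<Union>i\<in>{0..m}. A i \<times> B (m - i))"
  proof
    fix zs assume "zs \<in> Cat A B m"
    then obtain xs ys where z: "zs = xs @ ys" "xs \<in> A (sum_list xs)" "ys \<in> B (sum_list ys)" "sum_list xs + sum_list ys = m"
      unfolding mem_Cat by blast
    then have "(xs, ys) \<in> A (sum_list xs) \<times> B (m - sum_list xs)" by auto
    then show "zs \<in> (\<lambda>(xs,ys). xs @ ys) ` (\<Union>i\<in>{0..m}. A i \<times> B (m - i))"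
      using z by (intro image_eqI[of _ _ "(xs,ys)"]) auto
  qed
  moreover have "finite ((\<lambda>(xs,ys). xs @ ys) ` (\<Union>i\<in>{0..m}. A i \<times> B (m - i)))"
    using assms by auto
  ultimately show ?thesis by (rule finite_subset)
qed

definition FH :: "nat \<Rightarrow> nat \<Rightarrow> nat \<Rightarrow> nat list set" where
  "FH a b n = {lam \<in> partitions n. length lam = a + 2 * b \<and> lam ! (a + b - 1) = a}"

definition SM :: "nat \<Rightarrow> nat \<Rightarrow> nat \<Rightarrow> nat list set" where
  "SM a b n = {lam \<in> partitions n. count_list lam a = a \<and> length (filter (\<lambda>x. a < x) lam) = b}"

lemma FH_Cat:
  assumes a: "1 \<le> a"
  shows "FH a b n = Cat (LP (a + b - 1) (\<lambda>x. a \<le> x)) (Cat (Sg [a]) (LP b (\<lambda>x. 1 \<le> x \<and> x \<le> a))) n"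
proof
  show "FH a b n \<subseteq> Cat (LP (a + b - 1) (\<lambda>x. a \<le> x)) (Cat (Sg [a]) (LP b (\<lambda>x. 1 \<le> x \<and> x \<le> a))) n"
  proof
    fix lam assume lam: "lam \<in> FH a b n"
    define i where "i = a + b - 1"
    have il: "i < length lam" using lam a unfolding FH_def i_def by auto
    define xs where "xs = take i lam"
    define ys where "ys = drop (Suc i) lam"
    have ai: "lam ! i = a" using lam unfolding FH_def i_def by auto
    have e: "lam = xs @ a # ys"
      unfolding xs_def ys_def using id_take_nth_drop[OF il] unfolding ai .
    have lx: "length xs = i" using il unfolding xs_def by simp
    have ly: "length ys = b" using lam a unfolding ys_def FH_def i_def by auto
    have p: "sorted_wrt (\<ge>) (xs @ a # ys)" "\<forall>x\<in>set (xs @ a # ys). 0 < x" "sum_list (xs @ a # ys) = n"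
      using lam unfolding e FH_def partitions_def is_partition_def by auto
    have "xs \<in> LP i (\<lambda>x. a \<le> x) (sum_list xs)"
      using p(1) lx unfolding LP_def by (auto simp: sorted_wrt_append)
    moreover have "ys \<in> LP b (\<lambda>x. 1 \<le> x \<and> x \<le> a) (sum_list ys)"
      using p(1,2) ly unfolding LP_def by (auto simp: sorted_wrt_append Suc_le_eq)
    moreover have "a # ys \<in> Cat (Sg [a]) (LP b (\<lambda>x. 1 \<le> x \<and> x \<le> a)) (sum_list (a # ys))"
      unfolding Cat_Sg_left using calculation(2) by auto
    ultimately show "lam \<in> Cat (LP (a + b - 1) (\<lambda>x. a \<le> x)) (Cat (Sg [a]) (LP b (\<lambda>x. 1 \<le> x \<and> x \<le> a))) n"
      unfolding mem_Cat i_def[symmetric] using p(3) e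
      by (intro exI[of _ xs] exI[of _ "a # ys"]) auto
  qed
next
  show "Cat (LP (a + b - 1) (\<lambda>x. a \<le> x)) (Cat (Sg [a]) (LP b (\<lambda>x. 1 \<le> x \<and> x \<le> a))) n \<subseteq> FH a b n"
  proof
    fix lam assume "lam \<in> Cat (LP (a + b - 1) (\<lambda>x. a \<le> x)) (Cat (Sg [a]) (LP b (\<lambda>x. 1 \<le> x \<and> x \<le> a))) n"
    then obtain xs ws where e0: "lam = xs @ ws" and xs: "xs \<in> LP (a + b - 1) (\<lambda>x. a \<le> x) (sum_list xs)"
      and ws: "ws \<in> Cat (Sg [a]) (LP b (\<lambda>x. 1 \<le> x \<and> x \<le> a)) (sum_list ws)" and sm0: "sum_list xs + sum_list ws = n"
      unfolding mem_Cat by blast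
    from ws obtain ys where e1: "ws = a # ys" and ys: "ys \<in> LP b (\<lambda>x. 1 \<le> x \<and> x \<le> a) (sum_list ys)"
      unfolding Cat_Sg_left by auto
    have e: "lam = xs @ a # ys" using e0 e1 by simp
    have sm: "sum_list xs + (a + sum_list ys) = n" using sm0 e1 by simp
    have srt: "sorted_wrt (\<ge>) (xs @ a # ys)"
    proof -
      have xa: "\<forall>x\<in>set xs. a \<le> x" and ya: "\<forall>y\<in>set (a # ys). y \<le> a" using xs ys unfolding LP_def by auto
      have "\<forall>x\<in>set xs. \<forall>y\<in>set (a # ys). y \<le> x"
      proof (intro ballI)
        fix x y assume "x \<in> set xs" "y \<in> set (a # ys)"
        then show "y \<le> x" using xa ya by (meson order_trans)
      qed
      then show ?thesis using xs ys unfolding LP_def by (auto simp: sorted_wrt_append)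
    qed
    have pos: "\<forall>x\<in>set (xs @ a # ys). 0 < x" using xs ys a unfolding LP_def by auto
    have "length xs = a + b - 1" "length ys = b" using xs ys unfolding LP_def by auto
    then have "length lam = a + 2 * b" "lam ! (a + b - 1) = a" using a unfolding e by (auto simp: nth_append)
    then show "lam \<in> FH a b n" using srt pos sm unfolding FH_def partitions_def is_partition_def e by auto
  qed
qed

lemma sorted_split3:
  "sorted_wrt (\<ge>) (lam::nat list) \<Longrightarrow> lam = filter (\<lambda>x. a < x) lam @ filter (\<lambda>x. x = a) lam @ filter (\<lambda>x. x < a) lam"
proof (induction lam)
  case Nil then show ?case by simp
next
  case (Cons x xs)
  have IH: "xs = filter (\<lambda>x. a < x) xs @ filter (\<lambda>x. x = a) xs @ filter (\<lambda>x. x < a) xs"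
    by (rule Cons.IH) (use Cons.prems in simp)
  have le: "\<forall>y\<in>set xs. y \<le> x" using Cons.prems by simp
  have "filter (\<lambda>x. a < x) (x # xs) @ filter (\<lambda>x. x = a) (x # xs) @ filter (\<lambda>x. x < a) (x # xs)
      = x # (filter (\<lambda>x. a < x) xs @ filter (\<lambda>x. x = a) xs @ filter (\<lambda>x. x < a) xs)"
  proof (cases "a < x")
    case True then show ?thesis by simp
  next
    case False
    then have f1: "filter (\<lambda>x. a < x) xs = []" using le by (auto simp: filter_empty_conv)
    show ?thesis
    proof (cases "x = a")
      case True then show ?thesis using f1 by simp
    next
      case False
      then have "x < a" using \<open>\<not> a < x\<close> by simp
      have f2: "filter (\<lambda>x. x = a) xs = []" using le \<open>x < a\<close> by (auto simp: filter_empty_conv)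
      have f3: "filter (\<lambda>x. x < a) xs = xs" using le \<open>x < a\<close> by (intro filter_True) auto
      show ?thesis using f1 f2 f3 \<open>x < a\<close> by simp
    qed
  qed
  then show ?case unfolding IH[symmetric] by (rule sym)
qed

lemma filter_eq_replicate: "filter (\<lambda>x. x = a) xs = replicate (count_list xs a) a"
  by (induction xs) auto

lemma count_list_replicate_same: "count_list (replicate n a) a = n"
  by (induction n) auto


lemma SM_Cat:
  assumes a: "1 \<le> a"
  shows "SM a b n = Cat (LP b (\<lambda>x. a < x)) (Cat (Sg (replicate a a)) (RR (a - 1))) n"
proof
  show "SM a b n \<subseteq> Cat (LP b (\<lambda>x. a < x)) (Cat (Sg (replicate a a)) (RR (a - 1))) n"
  proof
    fix lam assume lam: "lam \<in> SM a b n"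
    have p: "sorted_wrt (\<ge>) lam" "\<forall>x\<in>set lam. 0 < x" "sum_list lam = n" "count_list lam a = a"
      "length (filter (\<lambda>x. a < x) lam) = b"
      using lam unfolding SM_def partitions_def is_partition_def by auto
    define xs where "xs = filter (\<lambda>x. a < x) lam"
    define zs where "zs = filter (\<lambda>x. x < a) lam"
    have e: "lam = xs @ replicate a a @ zs"
      unfolding xs_def zs_def using sorted_split3[OF p(1), of a] unfolding filter_eq_replicate p(4) .
    have "xs \<in> LP b (\<lambda>x. a < x) (sum_list xs)"
      using p unfolding LP_def xs_def by (auto simp: sorted_wrt_filter)
    moreover have "zs \<in> RR (a - 1) (sum_list zs)"
      using p unfolding RR_def zs_def by (auto simp: sorted_wrt_filter Suc_le_eq)
    moreover have "replicate a a @ zs \<in> Cat (Sg (replicate a a)) (RR (a - 1)) (sum_list (replicate a a @ zs))"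
      unfolding Cat_Sg_left using calculation(2) by auto
    ultimately show "lam \<in> Cat (LP b (\<lambda>x. a < x)) (Cat (Sg (replicate a a)) (RR (a - 1))) n"
      unfolding mem_Cat using p(3) e
      by (intro exI[of _ xs] exI[of _ "replicate a a @ zs"]) auto
  qed
next
  show "Cat (LP b (\<lambda>x. a < x)) (Cat (Sg (replicate a a)) (RR (a - 1))) n \<subseteq> SM a b n"
  proof
    fix lam assume "lam \<in> Cat (LP b (\<lambda>x. a < x)) (Cat (Sg (replicate a a)) (RR (a - 1))) n"
    then obtain xs ws where e0: "lam = xs @ ws" and xs: "xs \<in> LP b (\<lambda>x. a < x) (sum_list xs)"
      and ws: "ws \<in> Cat (Sg (replicate a a)) (RR (a - 1)) (sum_list ws)" and sm0: "sum_list xs + sum_list ws = n"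
      unfolding mem_Cat by blast
    from ws obtain zs where e1: "ws = replicate a a @ zs" and zs: "zs \<in> RR (a - 1) (sum_list zs)"
      unfolding Cat_Sg_left by auto
    have e: "lam = xs @ replicate a a @ zs" using e0 e1 by simp
    have sm: "sum_list xs + (sum_list (replicate a a) + sum_list zs) = n" using sm0 e1 by simp
    have xa: "\<forall>x\<in>set xs. a < x" and za: "\<forall>z\<in>set zs. 1 \<le> z \<and> z < a"
      using xs zs a unfolding LP_def RR_def by auto
    have srt: "sorted_wrt (\<ge>) (xs @ replicate a a @ zs)"
    proof -
      have "\<forall>x\<in>set xs. \<forall>y\<in>set (replicate a a @ zs). y \<le> x"
        using xa za by fastforce
      moreover have "\<forall>x\<in>set (replicate a a). \<forall>y\<in>set zs. y \<le> x"
        using za by auto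
      moreover have "sorted_wrt (\<ge>) xs" "sorted_wrt (\<ge>) zs" using xs zs unfolding LP_def RR_def by auto
      ultimately show ?thesis unfolding sorted_wrt_append using sorted_replicate_ge[of a a] by blast
    qed
    have pos: "\<forall>x\<in>set (xs @ replicate a a @ zs). 0 < x" using xa za a by auto
    have c: "count_list lam a = a"
    proof -
      have "a \<notin> set xs" "a \<notin> set zs" using xa za by auto
      then show ?thesis unfolding e by (simp add: count_list_replicate_same)
    qed
    have f: "filter (\<lambda>x. a < x) lam = xs"
    proof -
      have "filter (\<lambda>x. a < x) xs = xs" using xa by simp
      moreover have "filter (\<lambda>x. a < x) zs = []" using za by (auto simp: filter_empty_conv)
      ultimately show ?thesis unfolding e by simp
    qed
    have "length xs = b" using xs unfolding LP_def by auto
    moreover have "is_partition n lam"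
    proof -
      have s1: "sum_list (xs @ replicate a a @ zs) = n" using sm by (simp only: sum_list_append)
      show ?thesis unfolding is_partition_def e using srt pos s1 by blast
    qed
    ultimately show "lam \<in> SM a b n" unfolding SM_def partitions_def using c f by simp
  qed
qed



lemma card_FH_SM:
  assumes a: "1 \<le> a"
  shows "card (FH a b n) = card (SM a b n)"
proof -
  have E1: "gf (LP (a + b - 1) (\<lambda>x. a \<le> x)) = fps_X ^ (a * (a + b - 1)) * gf (LP (a + b - 1) (\<lambda>_. True))"
    by (rule gf_shift) auto
  have E2: "gf (LP b (\<lambda>x. 1 \<le> x \<and> x \<le> a)) = fps_X ^ (1 * b) * gf (LP b (\<lambda>x. x \<le> a - 1))"
    by (rule gf_shift) (use a in auto)
  have E3: "gf (LP b (\<lambda>x. a < x)) = fps_X ^ ((a + 1) * b) * gf (LP b (\<lambda>_. True))"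
    by (rule gf_shift) auto
  have "gf (FH a b) = gf (Cat (LP (a + b - 1) (\<lambda>x. a \<le> x)) (Cat (Sg [a]) (LP b (\<lambda>x. 1 \<le> x \<and> x \<le> a))))"
    using FH_Cat[OF a] by metis
  also have "\<dots> = gf (LP (a + b - 1) (\<lambda>x. a \<le> x)) * gf (Cat (Sg [a]) (LP b (\<lambda>x. 1 \<le> x \<and> x \<le> a)))"
    by (rule gf_Cat[where k="a + b - 1"]) (auto dest: LP_props Cat_sum intro!: finite_LP finite_Cat finite_Sg)
  also have "gf (Cat (Sg [a]) (LP b (\<lambda>x. 1 \<le> x \<and> x \<le> a))) = fps_X ^ a * gf (LP b (\<lambda>x. 1 \<le> x \<and> x \<le> a))"
    by (subst gf_Cat_Sg_left) (auto dest: LP_props intro: finite_LP)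
  finally have F: "gf (FH a b) = fps_X ^ (a * (a + b - 1)) * fps_X ^ a * fps_X ^ b
      * (gf (LP (b + (a - 1)) (\<lambda>_. True)) * gf (LP b (\<lambda>x. x \<le> a - 1)))"
    unfolding E1 E2 using a by (simp add: ac_simps)
  have "gf (SM a b) = gf (Cat (LP b (\<lambda>x. a < x)) (Cat (Sg (replicate a a)) (RR (a - 1))))"
    using SM_Cat[OF a] by metis
  also have "\<dots> = gf (LP b (\<lambda>x. a < x)) * gf (Cat (Sg (replicate a a)) (RR (a - 1)))"
    by (rule gf_Cat[where k="b"]) (auto dest: LP_props Cat_sum intro!: finite_LP finite_Cat finite_RR finite_Sg)
  also have "gf (Cat (Sg (replicate a a)) (RR (a - 1))) = fps_X ^ (a * a) * gf (RR (a - 1))"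
    by (subst gf_Cat_Sg_left) (auto dest: RR_sum intro: finite_RR simp: sum_list_replicate)
  finally have S: "gf (SM a b) = fps_X ^ ((a + 1) * b) * fps_X ^ (a * a)
      * (gf (LP b (\<lambda>_. True)) * gf (RR (a - 1)))"
    unfolding E3 by (simp add: ac_simps)
  have ex: "a * (a + b - 1) + a + b = (a + 1) * b + a * a" using a
    by (cases a) (auto simp: algebra_simps)
  have "(fps_X :: rat fps) ^ (a * (a + b - 1)) * fps_X ^ a * fps_X ^ b = fps_X ^ ((a + 1) * b) * fps_X ^ (a * a)"
    by (simp only: power_add[symmetric] ex)
  then have "gf (FH a b) = gf (SM a b)" unfolding F S core by simp
  then have "gf (FH a b) $ n = gf (SM a b) $ n" by simp
  then show ?thesis by (simp add: gf_nth)
qed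


lemma part_props: "lam \<in> partitions n \<Longrightarrow> sorted_wrt (\<ge>) lam \<and> (\<forall>x\<in>set lam. 1 \<le> x) \<and> sum_list lam = n"
  unfolding partitions_def is_partition_def by (auto simp: Suc_le_eq)

lemma part_length: "lam \<in> partitions n \<Longrightarrow> length lam \<le> n"
  using part_props[of lam n] length_le_sum_pos[of lam] by simp

lemma part_elem: "lam \<in> partitions n \<Longrightarrow> x \<in> set lam \<Longrightarrow> x \<le> n"
  using part_props[of lam n] member_le_sum_list[of x lam] by simp

lemma finite_partitions: "finite (partitions n)"
proof -
  have "partitions n \<subseteq> {xs. set xs \<subseteq> {0..n} \<and> length xs \<le> n}"
  proof
    fix xs assume xs: "xs \<in> partitions n"
    have "set xs \<subseteq> {0..n}" using part_elem[OF xs] by auto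
    then show "xs \<in> {xs. set xs \<subseteq> {0..n} \<and> length xs \<le> n}"
      using part_length[OF xs] by simp
  qed
  moreover have "finite {xs. set xs \<subseteq> {0..n} \<and> length xs \<le> n}"
    by (rule finite_lists_length_le) simp
  ultimately show ?thesis by (rule finite_subset)
qed

lemma FH_unique:
  assumes "lam \<in> FH a b n" "lam \<in> FH a' b' n" "1 \<le> a" "1 \<le> a'"
  shows "a = a' \<and> b = b'"
proof -
  have L: "length lam = a + 2 * b" "length lam = a' + 2 * b'" "lam ! (a + b - 1) = a" "lam ! (a' + b' - 1) = a'"
    "sorted_wrt (\<ge>) lam" using assms unfolding FH_def partitions_def is_partition_def by auto
  have "\<not> (a + b < a' + b')"
  proof
    assume lt: "a + b < a' + b'"
    have i1: "a + b - 1 < a' + b' - 1" using lt assms(3,4) by linarith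
    have i2: "a' + b' - 1 < length lam" using L(1,2) assms(3,4) by linarith
    have "lam ! (a' + b' - 1) \<le> lam ! (a + b - 1)"
      using sorted_wrt_nth_less[OF L(5) i1 i2] by simp
    then have "a' \<le> a" using L(3,4) by simp
    then show False using L(1,2) lt by linarith
  qed
  moreover have "\<not> (a' + b' < a + b)"
  proof
    assume lt: "a' + b' < a + b"
    have i1: "a' + b' - 1 < a + b - 1" using lt assms(3,4) by linarith
    have i2: "a + b - 1 < length lam" using L(1,2) assms(3,4) by linarith
    have "lam ! (a + b - 1) \<le> lam ! (a' + b' - 1)"
      using sorted_wrt_nth_less[OF L(5) i1 i2] by simp
    then have "a \<le> a'" using L(3,4) by simp
    then show False using L(1,2) lt by linarith
  qed
  ultimately have "a + b = a' + b'" by simp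
  then show ?thesis using L by auto
qed

lemma fixed_iff:
  assumes "lam \<in> partitions n"
  shows "has_fixed_hook lam \<longleftrightarrow> (\<exists>a\<in>{1..n}. \<exists>b\<in>{0..n}. lam \<in> FH a b n)"
proof
  assume "has_fixed_hook lam"
  then obtain i where i: "1 \<le> i" "i \<le> length lam" "int (lam ! (i - 1)) + (int (length lam) - int i) = int i"
    unfolding has_fixed_hook_def has_h_fixed_hook_def first_col_hook_def by auto
  define a where "a = lam ! (i - 1)"
  have "a \<in> set lam" unfolding a_def using i by auto
  then have a1: "1 \<le> a" and an: "a \<le> n"
    using part_props[OF assms] part_elem[OF assms] by auto
  have h: "int a + (int (length lam) - int i) = int i" using i(3) unfolding a_def .
  then have h2: "a + length lam = 2 * i" by linarith
  define b where "b = i - a"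
  have ai: "a \<le> i" using h2 i(2) by linarith
  then have ln: "length lam = a + 2 * b" "a + b = i" using h2 unfolding b_def by linarith+
  have "b \<le> n" using ln part_length[OF assms] by linarith
  moreover have "lam ! (a + b - 1) = a" using ln(2) by (simp add: a_def)
  then have "lam \<in> FH a b n" using assms ln(1) unfolding FH_def by blast
  ultimately show "\<exists>a\<in>{1..n}. \<exists>b\<in>{0..n}. lam \<in> FH a b n" using a1 an
    by (intro bexI[of _ a] bexI[of _ b]) auto
next
  assume "\<exists>a\<in>{1..n}. \<exists>b\<in>{0..n}. lam \<in> FH a b n"
  then obtain a b where ab: "1 \<le> a" "lam \<in> FH a b n" by auto
  then have L: "length lam = a + 2 * b" "lam ! (a + b - 1) = a" unfolding FH_def by auto
  have "1 \<le> a + b" "a + b \<le> length lam" using ab(1) L(1) by linarith+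
  moreover have "int (lam ! (a + b - 1)) + (int (length lam) - int (a + b)) = int (a + b)"
    unfolding L by simp
  ultimately show "has_fixed_hook lam"
    unfolding has_fixed_hook_def has_h_fixed_hook_def first_col_hook_def by auto
qed

lemma FH_sub: "FH a b n \<subseteq> partitions n"
  unfolding FH_def by auto

lemma SM_sub: "SM a b n \<subseteq> partitions n"
  unfolding SM_def by auto

lemma card_filter_sum: "finite A \<Longrightarrow> card {x \<in> A. P x} = (\<Sum>x\<in>A. if P x then 1 else 0)"
proof -
  assume f: "finite A"
  have "card {x \<in> A. P x} = (\<Sum>x\<in>{x \<in> A. P x}. 1)" by simp
  also have "\<dots> = (\<Sum>x\<in>A. if P x then 1 else 0)" by (rule sum.inter_filter[OF f])
  finally show ?thesis .
qed

lemma card_LHS: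
  "card {lam \<in> partitions n. has_fixed_hook lam} = (\<Sum>a\<in>{1..n}. \<Sum>b\<in>{0..n}. card (FH a b n))"
proof -
  have eq: "{lam \<in> partitions n. has_fixed_hook lam} = (\<Union>a\<in>{1..n}. \<Union>b\<in>{0..n}. FH a b n)"
  proof (rule set_eqI)
    fix lam
    show "lam \<in> {lam \<in> partitions n. has_fixed_hook lam} \<longleftrightarrow> lam \<in> (\<Union>a\<in>{1..n}. \<Union>b\<in>{0..n}. FH a b n)"
    proof (cases "lam \<in> partitions n")
      case True then show ?thesis using fixed_iff[OF True] by blast
    next
      case False then show ?thesis using FH_sub by blast
    qed
  qed
  have U: "\<And>a a' b b' lam. a \<in> {1..n} \<Longrightarrow> a' \<in> {1..n} \<Longrightarrow> lam \<in> FH a b n \<Longrightarrow> lam \<in> FH a' b' n \<Longrightarrow> a = a' \<and> b = b'"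
    using FH_unique by simp
  have fin: "finite (FH a b n)" for a b using finite_subset[OF FH_sub finite_partitions] .
  have inner: "card (\<Union>b\<in>{0..n}. FH a b n) = (\<Sum>b\<in>{0..n}. card (FH a b n))" if "a \<in> {1..n}" for a
  proof (rule card_UN_disjoint)
    show "\<forall>b\<in>{0..n}. finite (FH a b n)" using fin by blast
    show "\<forall>b\<in>{0..n}. \<forall>b'\<in>{0..n}. b \<noteq> b' \<longrightarrow> FH a b n \<inter> FH a b' n = {}"
      using U[OF that that] by blast
  qed simp
  have "card (\<Union>a\<in>{1..n}. \<Union>b\<in>{0..n}. FH a b n) = (\<Sum>a\<in>{1..n}. card (\<Union>b\<in>{0..n}. FH a b n))"
  proof (rule card_UN_disjoint)
    show "\<forall>a\<in>{1..n}. finite (\<Union>b\<in>{0..n}. FH a b n)" using fin by blast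
    show "\<forall>a\<in>{1..n}. \<forall>a'\<in>{1..n}. a \<noteq> a' \<longrightarrow> (\<Union>b\<in>{0..n}. FH a b n) \<inter> (\<Union>b\<in>{0..n}. FH a' b n) = {}"
      using U by blast
  qed simp
  also have "\<dots> = (\<Sum>a\<in>{1..n}. \<Sum>b\<in>{0..n}. card (FH a b n))"
    by (rule sum.cong[OF refl]) (rule inner)
  finally show ?thesis unfolding eq .
qed

lemma card_RHS:
  "(\<Sum>lam\<in>partitions n. card (self_mult_parts lam)) = (\<Sum>a\<in>{1..n}. \<Sum>b\<in>{0..n}. card (SM a b n))"
proof -
  have "card (self_mult_parts lam) = (\<Sum>a\<in>{1..n}. if count_list lam a = a then 1 else 0)"
    if lam: "lam \<in> partitions n" for lam
  proof -
    have "self_mult_parts lam = {a \<in> {1..n}. count_list lam a = a}"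
    proof -
      have "a \<le> n" if "1 \<le> a" "count_list lam a = a" for a
      proof -
        have "count_list lam a \<noteq> 0" using that by simp
        then have "a \<in> set lam" using count_list_0_iff[of lam a] by auto
        then show ?thesis using part_elem lam by blast
      qed
      then show ?thesis unfolding self_mult_parts_def by auto
    qed
    then show ?thesis using card_filter_sum[of "{1..n}" "\<lambda>a. count_list lam a = a"] by simp
  qed
  then have "(\<Sum>lam\<in>partitions n. card (self_mult_parts lam))
      = (\<Sum>lam\<in>partitions n. \<Sum>a\<in>{1..n}. if count_list lam a = a then 1 else 0)"
    by (rule sum.cong[OF refl])
  also have "\<dots> = (\<Sum>a\<in>{1..n}. \<Sum>lam\<in>partitions n. if count_list lam a = a then 1 else 0)"
    by (rule sum.swap)
  also have "\<dots> = (\<Sum>a\<in>{1..n}. card {lam \<in> partitions n. count_list lam a = a})"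
    by (rule sum.cong[OF refl]) (rule card_filter_sum[OF finite_partitions, symmetric])
  also have "\<dots> = (\<Sum>a\<in>{1..n}. \<Sum>b\<in>{0..n}. card (SM a b n))"
  proof (rule sum.cong[OF refl])
    fix a assume "a \<in> {1..n}"
    have eq: "{lam \<in> partitions n. count_list lam a = a} = (\<Union>b\<in>{0..n}. SM a b n)"
    proof
      show "{lam \<in> partitions n. count_list lam a = a} \<subseteq> (\<Union>b\<in>{0..n}. SM a b n)"
      proof
        fix lam assume l: "lam \<in> {lam \<in> partitions n. count_list lam a = a}"
        then have lp0: "lam \<in> partitions n \<and> count_list lam a = a" by (rule CollectD)
        have lp: "lam \<in> partitions n" "count_list lam a = a" using lp0 by (rule conjunct1, rule conjunct2)
        have "length (filter (\<lambda>x. a < x) lam) \<le> n"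
          using length_filter_le[of "\<lambda>x. a < x" lam] part_length[OF lp(1)] by (rule order_trans)
        then have b1: "length (filter (\<lambda>x. a < x) lam) \<in> {0..n}" by simp
        have sm: "lam \<in> SM a (length (filter (\<lambda>x. a < x) lam)) n" using lp unfolding SM_def by blast
        show "lam \<in> (\<Union>b\<in>{0..n}. SM a b n)" using UN_I[where B="\<lambda>b. SM a b n", OF b1 sm] by simp
      qed
      show "(\<Union>b\<in>{0..n}. SM a b n) \<subseteq> {lam \<in> partitions n. count_list lam a = a}"
        unfolding SM_def by blast
    qed
    have "card (\<Union>b\<in>{0..n}. SM a b n) = (\<Sum>b\<in>{0..n}. card (SM a b n))"
    proof (rule card_UN_disjoint)
      show "\<forall>b\<in>{0..n}. finite (SM a b n)"
        using finite_subset[OF SM_sub finite_partitions] by blast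
      show "\<forall>b\<in>{0..n}. \<forall>b'\<in>{0..n}. b \<noteq> b' \<longrightarrow> SM a b n \<inter> SM a b' n = {}"
        unfolding SM_def by blast
    qed simp
    then show "card {lam \<in> partitions n. count_list lam a = a} = (\<Sum>b\<in>{0..n}. card (SM a b n))"
      unfolding eq .
  qed
  finally show ?thesis .
qed

theorem theorem2p1:
  fixes n :: nat
  assumes "n \<ge> 1"
  shows "card {lam \<in> partitions n. has_fixed_hook lam}
         = (\<Sum>lam\<in>partitions n. card (self_mult_parts lam))"
  unfolding card_LHS card_RHS
  by (intro sum.cong refl card_FH_SM) auto

end
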